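(* Let $(M,g,h)$ be a $4$-dimensional smooth metric measure spacetime which is a solution of the vacuum weighted Einstein field equations $h\rho-\operatorname{Hes}_h+\Delta h\, g=0$, such that $(M,g)$ is non-flat and is a $pr$-wave with metric $g=2\,du\,dv+F(u,v,x,y)\,dv^2+dx^2+dy^2$ in local coordinates $(u,v,x,y)$. Then the Ricci operator is nilpotent, and the density function $h$ takes the form \[ h(v,x,y)=h_x(v)x+h_y(v)y+h_0(v), \] while $F$ is given by \[ F(u,v,x,y)=F_1(v,x,y)u+F_0(v,x,y), \] for suitable smooth functions $h_x,h_y,h_0,F_1,F_0$.
   Context: A smooth metric measure spacetime is a triple $(M,g,h)$ (shorthand for $(M,g,h\,dvol_g)$) where $(M,g)$ is a Lorentzian manifold and $h$ is a positive smooth function on $M$, assumed non-constant on any open subset (so $\nabla h\neq0$). The weighted Einstein tensor is $G^h=h\rho-\operatorname{Hes}_h+\Delta h\, g$, where $\rho$ is the Ricci tensor, $\operatorname{Hes}_h$ the Hessian and $\Delta h$ the Laplacian of $h$; $(M,g,h)$ is a solution of the vacuum weighted Einstein field equations if $G^h=0$ on $M$. The Ricci operator $\operatorname{Ric}$ is the $(1,1)$-tensor with $g(\operatorname{Ric}X,Y)=\rho(X,Y)$. A $pr$-wave is a Lorentzian manifold admitting a recurrent lightlike vector field $V$ (i.e. $\nabla_XV=\omega(X)V$ for some $1$-form $\omega$) such that $R(V^\perp,V^\perp,\cdot,\cdot)=0$; in dimension $4$ it admits local coordinates $(u,v,x,y)$ with $g=2\,du\,dv+F(u,v,x,y)\,dv^2+dx^2+dy^2$.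 *)

theory Defs
  imports "HOL-Analysis.Analysis"
begin

text \<open>Points of the coordinate chart: (u, v, x, y).\<close>
type_synonym pt = "real \<times> real \<times> real \<times> real"

definition dd :: "'a::real_normed_vector \<Rightarrow> ('a \<Rightarrow> real) \<Rightarrow> 'a \<Rightarrow> real" where
  "dd b f p = deriv (\<lambda>t. f (p + t *\<^sub>R b)) 0"

definition smooth_on :: "'a::euclidean_space set \<Rightarrow> ('a \<Rightarrow> real) \<Rightarrow> bool" where
  "smooth_on S f \<longleftrightarrow> (\<forall>bs. set bs \<subseteq> Basis \<longrightarrow> (foldr dd bs f) differentiable_on S)"

text \<open>Coordinate vector fields: index 0 = u, 1 = v, 2 = x, 3 = y.\<close>
definition ecoord :: "nat \<Rightarrow> pt" where
  "ecoord i = (if i = 0 then (1,0,0,0) else if i = 1 then (0,1,0,0)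
               else if i = 2 then (0,0,1,0) else (0,0,0,1))"

definition pd :: "nat \<Rightarrow> (pt \<Rightarrow> real) \<Rightarrow> pt \<Rightarrow> real" where
  "pd i f = dd (ecoord i) f"

text \<open>Metric g = 2 du dv + F dv^2 + dx^2 + dy^2 and its inverse.\<close>
definition gpr :: "(pt \<Rightarrow> real) \<Rightarrow> nat \<Rightarrow> nat \<Rightarrow> pt \<Rightarrow> real" where
  "gpr F i j p = (if {i,j} = {0,1} then 1 else if i = 1 \<and> j = 1 then F p
                  else if i = j \<and> (i = 2 \<or> i = 3) then 1 else 0)"

definition gpr_inv :: "(pt \<Rightarrow> real) \<Rightarrow> nat \<Rightarrow> nat \<Rightarrow> pt \<Rightarrow> real" where
  "gpr_inv F i j p = (if {i,j} = {0,1} then 1 else if i = 0 \<and> j = 0 then - F p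
                  else if i = j \<and> (i = 2 \<or> i = 3) then 1 else 0)"

lemma gpr_inv_is_inverse:
  assumes "i < 4" "j < 4"
  shows "(\<Sum>k<4. gpr F i k p * gpr_inv F k j p) = (if i = j then 1 else 0)"
proof -
  have "i \<in> {0,1,2,3}" "j \<in> {0,1,2,3}" using assms by auto
  then show ?thesis unfolding gpr_def gpr_inv_def
    by (auto simp: lessThan_nat_numeral doubleton_eq_iff)
qed

definition christ :: "(nat \<Rightarrow> nat \<Rightarrow> pt \<Rightarrow> real) \<Rightarrow> (nat \<Rightarrow> nat \<Rightarrow> pt \<Rightarrow> real)
                      \<Rightarrow> nat \<Rightarrow> nat \<Rightarrow> nat \<Rightarrow> pt \<Rightarrow> real" where
  "christ g gi k i j p = (1/2) * (\<Sum>l<4. gi k l p *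
      (pd i (g j l) p + pd j (g i l) p - pd l (g i j) p))"

text \<open>Riemann curvature components R^l_{ijk}, R(d_i,d_j)d_k = R^l_{ijk} d_l.\<close>
definition riem :: "(nat \<Rightarrow> nat \<Rightarrow> pt \<Rightarrow> real) \<Rightarrow> (nat \<Rightarrow> nat \<Rightarrow> pt \<Rightarrow> real)
                    \<Rightarrow> nat \<Rightarrow> nat \<Rightarrow> nat \<Rightarrow> nat \<Rightarrow> pt \<Rightarrow> real" where
  "riem g gi l i j k p =
     pd i (christ g gi l j k) p - pd j (christ g gi l i k) p
     + (\<Sum>m<4. christ g gi l i m p * christ g gi m j k p
              - christ g gi l j m p * christ g gi m i k p)"

definition ricci :: "(nat \<Rightarrow> nat \<Rightarrow> pt \<Rightarrow> real) \<Rightarrow> (nat \<Rightarrow> nat \<Rightarrow> pt \<Rightarrow> real)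
                     \<Rightarrow> nat \<Rightarrow> nat \<Rightarrow> pt \<Rightarrow> real" where
  "ricci g gi j k p = (\<Sum>i<4. riem g gi i i j k p)"

definition ricop :: "(nat \<Rightarrow> nat \<Rightarrow> pt \<Rightarrow> real) \<Rightarrow> (nat \<Rightarrow> nat \<Rightarrow> pt \<Rightarrow> real)
                     \<Rightarrow> pt \<Rightarrow> nat \<Rightarrow> nat \<Rightarrow> real" where
  "ricop g gi p a b = (\<Sum>c<4. gi a c p * ricci g gi c b p)"

definition hess :: "(nat \<Rightarrow> nat \<Rightarrow> pt \<Rightarrow> real) \<Rightarrow> (nat \<Rightarrow> nat \<Rightarrow> pt \<Rightarrow> real)
                    \<Rightarrow> (pt \<Rightarrow> real) \<Rightarrow> nat \<Rightarrow> nat \<Rightarrow> pt \<Rightarrow> real" where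
  "hess g gi h i j p = pd i (pd j h) p - (\<Sum>k<4. christ g gi k i j p * pd k h p)"

definition lap :: "(nat \<Rightarrow> nat \<Rightarrow> pt \<Rightarrow> real) \<Rightarrow> (nat \<Rightarrow> nat \<Rightarrow> pt \<Rightarrow> real)
                   \<Rightarrow> (pt \<Rightarrow> real) \<Rightarrow> pt \<Rightarrow> real" where
  "lap g gi h p = (\<Sum>i<4. \<Sum>j<4. gi i j p * hess g gi h i j p)"

definition weinstein :: "(nat \<Rightarrow> nat \<Rightarrow> pt \<Rightarrow> real) \<Rightarrow> (nat \<Rightarrow> nat \<Rightarrow> pt \<Rightarrow> real)
                         \<Rightarrow> (pt \<Rightarrow> real) \<Rightarrow> nat \<Rightarrow> nat \<Rightarrow> pt \<Rightarrow> real" where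
  "weinstein g gi h i j p = h p * ricci g gi i j p - hess g gi h i j p + lap g gi h p * g i j p"

fun mpow4 :: "(nat \<Rightarrow> nat \<Rightarrow> real) \<Rightarrow> nat \<Rightarrow> nat \<Rightarrow> nat \<Rightarrow> real" where
  "mpow4 A 0 = (\<lambda>i j. if i = j then 1 else 0)"
| "mpow4 A (Suc n) = (\<lambda>i j. \<Sum>k<4. A i k * mpow4 A n k j)"

definition nilpotent4 :: "(nat \<Rightarrow> nat \<Rightarrow> real) \<Rightarrow> bool" where
  "nilpotent4 A \<longleftrightarrow> (\<exists>n. \<forall>i<4. \<forall>j<4. mpow4 A n i j = 0)"

end

theory Submission
  imports Defs
begin



lemma ecoord_Basis: "ecoord i \<in> Basis"
  by (auto simp: ecoord_def Basis_prod_def zero_prod_def)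

lemma Basis_pt: "(b::pt) \<in> Basis \<Longrightarrow> \<exists>i<4. b = ecoord i"
proof -
  assume "b \<in> Basis"
  then have "b \<in> {ecoord 0, ecoord 1, ecoord 2, ecoord 3}"
    by (auto simp: ecoord_def Basis_prod_def zero_prod_def)
  then show ?thesis by force
qed

lemma line_DERIV:
  assumes "(f has_derivative f') (at (q + x *\<^sub>R e))"
  shows "((\<lambda>y. f (q + y *\<^sub>R e)) has_real_derivative f' e) (at x)"
proof -
  have l: "linear f'" using assms has_derivative_linear by blast
  have "((\<lambda>y. q + y *\<^sub>R e) has_derivative (\<lambda>y. y *\<^sub>R e)) (at x)"
    by (auto intro!: derivative_eq_intros)
  from has_derivative_compose[OF this assms]
  have "((\<lambda>y. f (q + y *\<^sub>R e)) has_derivative (\<lambda>y. f' (y *\<^sub>R e))) (at x)" .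
  moreover have "(\<lambda>y. f' (y *\<^sub>R e)) = (*) (f' e)"
    using linear_cmul[OF l] by (auto simp: mult.commute)
  ultimately show ?thesis unfolding has_field_derivative_def by simp
qed

lemma dd_frechet:
  assumes "(f has_derivative f') (at p)"
  shows "dd e f p = f' e"
proof -
  have "((\<lambda>y. f (p + y *\<^sub>R e)) has_real_derivative f' e) (at 0)"
    using line_DERIV[of f f' p 0 e] assms by simp
  then show ?thesis unfolding dd_def by (rule DERIV_imp_deriv)
qed

lemma line_DERIV_dd:
  assumes "f differentiable (at (q + x *\<^sub>R e))"
  shows "((\<lambda>y. f (q + y *\<^sub>R e)) has_real_derivative dd e f (q + x *\<^sub>R e)) (at x)"
proof -
  obtain f' where d: "(f has_derivative f') (at (q + x *\<^sub>R e))"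
    using assms unfolding differentiable_def by blast
  show ?thesis using line_DERIV[OF d] dd_frechet[OF d] by simp
qed

lemma DERIV0_dd:
  assumes "f differentiable (at p)"
  shows "((\<lambda>y. f (p + y *\<^sub>R e)) has_real_derivative dd e f p) (at 0)"
  using line_DERIV_dd[of f p 0 e] assms by simp

lemma dd_mult:
  assumes "f differentiable (at p)" "g differentiable (at p)"
  shows "dd e (\<lambda>q. f q * g q) p = dd e f p * g p + f p * dd e g p"
proof -
  have "((\<lambda>y. f (p + y *\<^sub>R e) * g (p + y *\<^sub>R e)) has_real_derivative
          dd e f p * g (p + 0 *\<^sub>R e) + f (p + 0 *\<^sub>R e) * dd e g p) (at 0)"
    using DERIV_mult[OF DERIV0_dd[OF assms(1), of e] DERIV0_dd[OF assms(2), of e]] by (simp add: ac_simps)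
  then show ?thesis unfolding dd_def[of e "\<lambda>q. f q * g q"] by (simp add: DERIV_imp_deriv)
qed

lemma dd_add:
  assumes "f differentiable (at p)" "g differentiable (at p)"
  shows "dd e (\<lambda>q. f q + g q) p = dd e f p + dd e g p"
proof -
  have "((\<lambda>y. f (p + y *\<^sub>R e) + g (p + y *\<^sub>R e)) has_real_derivative
          dd e f p + dd e g p) (at 0)"
    by (rule DERIV_add[OF DERIV0_dd[OF assms(1), of e] DERIV0_dd[OF assms(2), of e]])
  then show ?thesis unfolding dd_def[of e "\<lambda>q. f q + g q"] by (simp add: DERIV_imp_deriv)
qed

lemma dd_diff:
  assumes "f differentiable (at p)" "g differentiable (at p)"
  shows "dd e (\<lambda>q. f q - g q) p = dd e f p - dd e g p"
proof -
  have "((\<lambda>y. f (p + y *\<^sub>R e) - g (p + y *\<^sub>R e)) has_real_derivative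
          dd e f p - dd e g p) (at 0)"
    by (rule DERIV_diff[OF DERIV0_dd[OF assms(1), of e] DERIV0_dd[OF assms(2), of e]])
  then show ?thesis unfolding dd_def[of e "\<lambda>q. f q - g q"] by (simp add: DERIV_imp_deriv)
qed

lemma dd_cmult:
  assumes "f differentiable (at p)"
  shows "dd e (\<lambda>q. c * f q) p = c * dd e f p"
proof -
  have "((\<lambda>y. c * f (p + y *\<^sub>R e)) has_real_derivative c * dd e f p) (at 0)"
    by (rule DERIV_cmult[OF DERIV0_dd[OF assms(1), of e]])
  then show ?thesis unfolding dd_def[of e "\<lambda>q. c * f q"] by (simp add: DERIV_imp_deriv)
qed

lemma dd_const: "dd e (\<lambda>q. c) p = 0"
  unfolding dd_def by simp

lemma dd_cong_open:
  assumes "open S" "p \<in> S" "\<And>q. q \<in> S \<Longrightarrow> f q = g q"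
  shows "dd e f p = dd e g p"
proof -
  have "\<forall>\<^sub>F y in nhds 0. p + y *\<^sub>R e \<in> S"
  proof -
    have "continuous (at 0) (\<lambda>y::real. p + y *\<^sub>R e)" by (intro continuous_intros)
    then have "((\<lambda>y::real. p + y *\<^sub>R e) \<longlongrightarrow> p) (nhds 0)"
      by (simp add: continuous_at tendsto_nhds_iff)
    then show ?thesis using assms(1,2) by (simp add: tendsto_def)
  qed
  then have "\<forall>\<^sub>F y in nhds 0. f (p + y *\<^sub>R e) = g (p + y *\<^sub>R e)"
    by eventually_elim (use assms(3) in auto)
  then show ?thesis unfolding dd_def by (rule deriv_cong_ev) simp
qed

lemma foldr_dd_cong_open:
  assumes "open S" "\<And>q. q \<in> S \<Longrightarrow> f q = g q"
  shows "q \<in> S \<Longrightarrow> foldr dd bs f q = foldr dd bs g q"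
proof (induction bs arbitrary: q)
  case Nil then show ?case using assms by simp
next
  case (Cons b bs) then show ?case
    using dd_cong_open[OF assms(1), of q "foldr dd bs f" "foldr dd bs g" b] by simp
qed

lemma smooth_pd: "smooth_on U f \<Longrightarrow> smooth_on U (pd i f)"
  unfolding smooth_on_def pd_def
proof (intro allI impI)
  fix bs :: "pt list"
  assume a: "\<forall>bs. set bs \<subseteq> Basis \<longrightarrow> foldr dd bs f differentiable_on U" "set bs \<subseteq> Basis"
  have "foldr dd bs (dd (ecoord i) f) = foldr dd (bs @ [ecoord i]) f" by simp
  moreover have "set (bs @ [ecoord i]) \<subseteq> Basis" using a(2) ecoord_Basis by auto
  ultimately show "foldr dd bs (dd (ecoord i) f) differentiable_on U" using a(1) by metis
qed

lemma smooth_diffble: "smooth_on U f \<Longrightarrow> open U \<Longrightarrow> p \<in> U \<Longrightarrow> f differentiable (at p)"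
  unfolding smooth_on_def
  by (metis differentiable_on_eq_differentiable_at empty_subsetI foldr.simps(1) id_apply list.set(1))



lemma pd_mult: "f differentiable (at p) \<Longrightarrow> g differentiable (at p) \<Longrightarrow>
   pd i (\<lambda>q. f q * g q) p = pd i f p * g p + f p * pd i g p"
  unfolding pd_def by (rule dd_mult)
lemma pd_add: "f differentiable (at p) \<Longrightarrow> g differentiable (at p) \<Longrightarrow>
   pd i (\<lambda>q. f q + g q) p = pd i f p + pd i g p"
  unfolding pd_def by (rule dd_add)
lemma pd_diff: "f differentiable (at p) \<Longrightarrow> g differentiable (at p) \<Longrightarrow>
   pd i (\<lambda>q. f q - g q) p = pd i f p - pd i g p"
  unfolding pd_def by (rule dd_diff)
lemma pd_cmult: "f differentiable (at p) \<Longrightarrow> pd i (\<lambda>q. c * f q) p = c * pd i f p"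
  unfolding pd_def by (rule dd_cmult)
lemma pd_cdiv: "f differentiable (at p) \<Longrightarrow> pd i (\<lambda>q. f q / c) p = pd i f p / c"
  using pd_cmult[of f p i "1/c"] by simp
lemma pd_minus: "f differentiable (at p) \<Longrightarrow> pd i (\<lambda>q. - f q) p = - pd i f p"
  using pd_cmult[of f p i "-1"] by simp
lemma pd_const: "pd i (\<lambda>q. c) p = 0"
  unfolding pd_def by (rule dd_const)
lemma pd_zero: "pd i (\<lambda>q. 0) p = 0"
  unfolding pd_def by (rule dd_const)

lemma pd_gpr: "pd i (gpr F k m) p = (if k = 1 \<and> m = 1 then pd i F p else 0)"
proof (cases "k = 1 \<and> m = 1")
  case True
  then have "gpr F k m = F" by (auto simp: gpr_def fun_eq_iff)
  then show ?thesis using True by simp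
next
  case False
  then have "gpr F k m = (\<lambda>q. gpr F k m 0)" by (auto simp: gpr_def fun_eq_iff)
  then show ?thesis using False by (metis pd_const)
qed

lemma lt4: "{..<4::nat} = {0,1,2,3}" by auto

lemma gpr_inv_alt: "gpr_inv F i j p = (if (i = 0 \<and> j = 1) \<or> (i = 1 \<and> j = 0) then 1
   else if i = 0 \<and> j = 0 then - F p else if i = j \<and> (i = 2 \<or> i = 3) then 1 else 0)"
  unfolding gpr_inv_def by (auto simp: doubleton_eq_iff)

lemma gpr_alt: "gpr F i j p = (if (i = 0 \<and> j = 1) \<or> (i = 1 \<and> j = 0) then 1
   else if i = 1 \<and> j = 1 then F p else if i = j \<and> (i = 2 \<or> i = 3) then 1 else 0)"
  unfolding gpr_def by (auto simp: doubleton_eq_iff)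

definition SF :: "(pt \<Rightarrow> real) \<Rightarrow> nat \<Rightarrow> pt \<Rightarrow> real" where
  "SF F l p = (if l = 0 then pd 1 F p - F p * pd 0 F p else if l = 1 then pd 0 F p else pd l F p)"

lemma christ_formula:
  assumes "l < 4"
  shows "christ (gpr F) (gpr_inv F) l j k p = (1/2) * ((if l = 0 then (if k = 1 then pd j F p else 0)
      + (if j = 1 then pd k F p else 0) else 0) - (if j = 1 \<and> k = 1 then SF F l p else 0))"
proof -
  have "l = 0 \<or> l = 1 \<or> l = 2 \<or> l = 3" using assms by auto
  then show ?thesis
    unfolding christ_def pd_gpr lt4 
    by (elim disjE) (simp_all add: gpr_inv_alt SF_def)
qed

definition dSF :: "(pt \<Rightarrow> real) \<Rightarrow> nat \<Rightarrow> nat \<Rightarrow> pt \<Rightarrow> real" where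
  "dSF F i l p = (if l = 0 then pd i (pd 1 F) p - (pd i F p * pd 0 F p + F p * pd i (pd 0 F) p)
     else if l = 1 then pd i (pd 0 F) p else pd i (pd l F) p)"

lemma dchrist:
  assumes dF: "F differentiable (at p)" and dF1: "\<And>m. pd m F differentiable (at p)" and l: "l < 4"
  shows "pd i (christ (gpr F) (gpr_inv F) l j k) p = (1/2) * ((if l = 0 then (if k = 1 then pd i (pd j F) p else 0)
      + (if j = 1 then pd i (pd k F) p else 0) else 0) - (if j = 1 \<and> k = 1 then dSF F i l p else 0))"
proof -
  have fe: "christ (gpr F) (gpr_inv F) l j k = (\<lambda>q. (1/2) * ((if l = 0 then (if k = 1 then pd j F q else 0)
      + (if j = 1 then pd k F q else 0) else 0) - (if j = 1 \<and> k = 1 then SF F l q else 0)))"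
    by (rule ext, rule christ_formula[OF l])
  show ?thesis unfolding fe SF_def dSF_def
    by (cases "l = 0"; cases "l = 1"; cases "j = 1"; cases "k = 1")
       (simp_all add: pd_mult pd_add pd_diff pd_cmult pd_cdiv pd_minus pd_const dF dF1)
qed



lemma mixed_mvt:
  fixes f :: "pt \<Rightarrow> real"
  assumes S: "\<And>x y. 0 \<le> x \<Longrightarrow> x \<le> s \<Longrightarrow> 0 \<le> y \<Longrightarrow> y \<le> s \<Longrightarrow> p + x *\<^sub>R e + y *\<^sub>R d \<in> U"
    and df: "\<And>q. q \<in> U \<Longrightarrow> f differentiable (at q)"
    and de: "\<And>q. q \<in> U \<Longrightarrow> dd e f differentiable (at q)" and s: "0 < s"
  shows "\<exists>x y. 0 < x \<and> x < s \<and> 0 < y \<and> y < s \<and>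
     f (p + s *\<^sub>R e + s *\<^sub>R d) - f (p + s *\<^sub>R e) - f (p + s *\<^sub>R d) + f p
       = s * (s * dd d (dd e f) (p + x *\<^sub>R e + y *\<^sub>R d))"
proof -
  define g where "g x = f (p + s *\<^sub>R d + x *\<^sub>R e) - f (p + x *\<^sub>R e)" for x
  define g' where "g' x = dd e f (p + s *\<^sub>R d + x *\<^sub>R e) - dd e f (p + x *\<^sub>R e)" for x
  have gd: "DERIV g x :> g' x" if "0 \<le> x" "x \<le> s" for x
  proof -
    have "p + x *\<^sub>R e + s *\<^sub>R d \<in> U" using S[of x s] that s by simp
    then have 1: "p + s *\<^sub>R d + x *\<^sub>R e \<in> U" by (simp add: add.commute add.left_commute)
    have 2: "p + x *\<^sub>R e \<in> U" using S[of x 0] that s by simp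
    show ?thesis unfolding g_def g'_def
      by (rule DERIV_diff; rule line_DERIV_dd; rule df; fact)
  qed
  obtain \<xi> where xi: "0 < \<xi>" "\<xi> < s" "g s - g 0 = (s - 0) * g' \<xi>"
    using MVT2[OF s gd] by blast
  define k where "k y = dd e f (p + \<xi> *\<^sub>R e + y *\<^sub>R d)" for y
  define k' where "k' y = dd d (dd e f) (p + \<xi> *\<^sub>R e + y *\<^sub>R d)" for y
  have kd: "DERIV k y :> k' y" if "0 \<le> y" "y \<le> s" for y
  proof -
    have "p + \<xi> *\<^sub>R e + y *\<^sub>R d \<in> U" using S[of \<xi> y] that xi by simp
    then show ?thesis unfolding k_def k'_def by (rule line_DERIV_dd[OF de])
  qed
  obtain \<eta> where eta: "0 < \<eta>" "\<eta> < s" "k s - k 0 = (s - 0) * k' \<eta>"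
    using MVT2[OF s kd] by blast
  have "f (p + s *\<^sub>R e + s *\<^sub>R d) - f (p + s *\<^sub>R e) - f (p + s *\<^sub>R d) + f p = g s - g 0"
    unfolding g_def by (simp add: add.commute add.left_commute)
  also have "\<dots> = s * (k s - k 0)" using xi(3) unfolding k_def g'_def 
    by (simp add: add.commute add.left_commute)
  also have "\<dots> = s * (s * k' \<eta>)" using eta(3) by simp
  finally show ?thesis using xi eta unfolding k'_def by blast
qed

lemma abs_aux: "\<bar>(A::real) - a\<bar> < \<bar>a - b\<bar> / 2 \<Longrightarrow> \<bar>A - b\<bar> < \<bar>a - b\<bar> / 2 \<Longrightarrow> False"
  by (auto simp: abs_if split: if_split_asm)

lemma clairaut_dd:
  fixes f :: "pt \<Rightarrow> real"
  assumes U: "open U" and p: "p \<in> U"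
    and df: "\<And>q. q \<in> U \<Longrightarrow> f differentiable (at q)"
    and de: "\<And>q. q \<in> U \<Longrightarrow> dd e f differentiable (at q)"
    and dd': "\<And>q. q \<in> U \<Longrightarrow> dd d f differentiable (at q)"
    and c1: "isCont (dd d (dd e f)) p" and c2: "isCont (dd e (dd d f)) p"
  shows "dd d (dd e f) p = dd e (dd d f) p"
proof (rule ccontr)
  assume ne: "dd d (dd e f) p \<noteq> dd e (dd d f) p"
  define \<epsilon> where "\<epsilon> = \<bar>dd d (dd e f) p - dd e (dd d f) p\<bar> / 2"
  have ep: "\<epsilon> > 0" using ne unfolding \<epsilon>_def by simp
  obtain r where r: "r > 0" "ball p r \<subseteq> U" using U p open_contains_ball by blast
  obtain \<delta>1 where d1: "\<delta>1 > 0" "\<And>q. dist q p < \<delta>1 \<Longrightarrow> dist (dd d (dd e f) q) (dd d (dd e f) p) < \<epsilon>"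
    using c1 ep unfolding continuous_at_eps_delta by blast
  obtain \<delta>2 where d2: "\<delta>2 > 0" "\<And>q. dist q p < \<delta>2 \<Longrightarrow> dist (dd e (dd d f) q) (dd e (dd d f) p) < \<epsilon>"
    using c2 ep unfolding continuous_at_eps_delta by blast
  define n where "n = norm e + norm d + 1"
  have n: "n > 0" "n \<ge> 1" unfolding n_def using norm_ge_zero[of e] norm_ge_zero[of d] by linarith+
  define s where "s = min r (min \<delta>1 \<delta>2) / (2 * n)"
  have s: "s > 0" unfolding s_def using r d1 d2 n by simp
  have sn: "s * n < r" "s * n < \<delta>1" "s * n < \<delta>2" unfolding s_def using r d1 d2 n by (auto simp: field_simps)
  have near: "dist (p + x *\<^sub>R a + y *\<^sub>R b) p \<le> s * n"
    if "0 \<le> x" "x \<le> s" "0 \<le> y" "y \<le> s" "a = e \<and> b = d \<or> a = d \<and> b = e" for x y a b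
  proof -
    have "dist (p + x *\<^sub>R a + y *\<^sub>R b) p = norm (x *\<^sub>R a + y *\<^sub>R b)" by (simp add: dist_norm)
    also have "\<dots> \<le> x * norm a + y * norm b" using norm_triangle_ineq[of "x *\<^sub>R a" "y *\<^sub>R b"] that by simp
    also have "\<dots> \<le> s * norm a + s * norm b" using that by (intro add_mono mult_right_mono) auto
    also have "\<dots> \<le> s * n" using that s unfolding n_def by (elim disjE conjE) (simp_all add: algebra_simps)
    finally show ?thesis .
  qed
  have S: "p + x *\<^sub>R a + y *\<^sub>R b \<in> U"
    if "0 \<le> x" "x \<le> s" "0 \<le> y" "y \<le> s" "a = e \<and> b = d \<or> a = d \<and> b = e" for x y a b
  proof -
    have "dist p (p + x *\<^sub>R a + y *\<^sub>R b) < r" using near[OF that] sn(1) by (simp add: dist_commute)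
    then show ?thesis using r(2) by auto
  qed
  have Sed: "\<And>x y. 0 \<le> x \<Longrightarrow> x \<le> s \<Longrightarrow> 0 \<le> y \<Longrightarrow> y \<le> s \<Longrightarrow> p + x *\<^sub>R e + y *\<^sub>R d \<in> U"
    by (rule S) simp_all
  have Sde: "\<And>x y. 0 \<le> x \<Longrightarrow> x \<le> s \<Longrightarrow> 0 \<le> y \<Longrightarrow> y \<le> s \<Longrightarrow> p + x *\<^sub>R d + y *\<^sub>R e \<in> U"
    by (rule S) simp_all
  obtain x1 y1 where A: "0 < x1" "x1 < s" "0 < y1" "y1 < s"
     "f (p + s *\<^sub>R e + s *\<^sub>R d) - f (p + s *\<^sub>R e) - f (p + s *\<^sub>R d) + f p
       = s * (s * dd d (dd e f) (p + x1 *\<^sub>R e + y1 *\<^sub>R d))"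
    using mixed_mvt[of s p e d U f, OF Sed df de s] by blast
  obtain x2 y2 where B: "0 < x2" "x2 < s" "0 < y2" "y2 < s"
     "f (p + s *\<^sub>R d + s *\<^sub>R e) - f (p + s *\<^sub>R d) - f (p + s *\<^sub>R e) + f p
       = s * (s * dd e (dd d f) (p + x2 *\<^sub>R d + y2 *\<^sub>R e))"
    using mixed_mvt[of s p d e U f, OF Sde df dd' s] by blast
  have eq: "dd d (dd e f) (p + x1 *\<^sub>R e + y1 *\<^sub>R d) = dd e (dd d f) (p + x2 *\<^sub>R d + y2 *\<^sub>R e)"
    using A(5) B(5) s by (simp add: algebra_simps)
  have "dist (p + x1 *\<^sub>R e + y1 *\<^sub>R d) p < \<delta>1" using near[of x1 y1 e d] A sn by simp
  then have 1: "\<bar>dd d (dd e f) (p + x1 *\<^sub>R e + y1 *\<^sub>R d) - dd d (dd e f) p\<bar> < \<epsilon>"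
    using d1(2) by (simp add: dist_real_def)
  have "dist (p + x2 *\<^sub>R d + y2 *\<^sub>R e) p < \<delta>2" using near[of x2 y2 d e] B sn by simp
  then have 2: "\<bar>dd e (dd d f) (p + x2 *\<^sub>R d + y2 *\<^sub>R e) - dd e (dd d f) p\<bar> < \<epsilon>"
    using d2(2) by (simp add: dist_real_def)
  show False using 1 2 eq abs_aux[of "dd d (dd e f) (p + x1 *\<^sub>R e + y1 *\<^sub>R d)" "dd d (dd e f) p" "dd e (dd d f) p"]
    unfolding \<epsilon>_def by simp
qed

lemma clairaut:
  fixes f :: "pt \<Rightarrow> real"
  assumes U: "open U" and sf: "smooth_on U f" and p: "p \<in> U"
  shows "pd i (pd j f) p = pd j (pd i f) p"
proof -
  have d: "\<And>g q. smooth_on U g \<Longrightarrow> q \<in> U \<Longrightarrow> g differentiable (at q)"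
    using smooth_diffble U by blast
  have s1: "smooth_on U (pd i f)" "smooth_on U (pd j f)" "smooth_on U (pd i (pd j f))"
     "smooth_on U (pd j (pd i f))" using sf by (simp_all add: smooth_pd)
  have c1: "isCont (pd i (pd j f)) p" "isCont (pd j (pd i f)) p"
    using d[OF s1(3) p] d[OF s1(4) p] differentiable_imp_continuous_within by blast+
  show ?thesis unfolding pd_def
    apply (rule clairaut_dd[OF U p])
    using d[OF sf] d[OF s1(1)] d[OF s1(2)] c1 unfolding pd_def by blast+
qed



context fixes F :: "pt \<Rightarrow> real" and p :: pt
  assumes dF: "F differentiable (at p)" and dF1: "\<And>m. pd m F differentiable (at p)"
begin
lemmas CS = christ_formula dchrist[OF dF dF1] SF_def dSF_def

lemma ricci_vals:
  "ricci (gpr F) (gpr_inv F) 0 0 p = 0"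
  "ricci (gpr F) (gpr_inv F) 0 1 p = 1/2 * pd 0 (pd 0 F) p"
  "ricci (gpr F) (gpr_inv F) 1 0 p = 1/2 * pd 0 (pd 0 F) p"
  "ricci (gpr F) (gpr_inv F) 0 2 p = 0"
  "ricci (gpr F) (gpr_inv F) 2 0 p = 0"
  "ricci (gpr F) (gpr_inv F) 0 3 p = 0"
  "ricci (gpr F) (gpr_inv F) 3 0 p = 0"
  "ricci (gpr F) (gpr_inv F) 2 2 p = 0"
  "ricci (gpr F) (gpr_inv F) 2 3 p = 0"
  "ricci (gpr F) (gpr_inv F) 3 2 p = 0"
  "ricci (gpr F) (gpr_inv F) 3 3 p = 0"
  "ricci (gpr F) (gpr_inv F) 2 1 p = 1/2 * pd 0 (pd 2 F) p"
  "ricci (gpr F) (gpr_inv F) 3 1 p = 1/2 * pd 0 (pd 3 F) p"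
  unfolding ricci_def riem_def lt4 by (simp_all add: CS algebra_simps)

lemma flat:
  assumes "pd 0 (pd 0 F) p = 0" "pd 0 (pd 2 F) p = 0" "pd 0 (pd 3 F) p = 0"
   "pd 2 (pd 0 F) p = 0" "pd 2 (pd 2 F) p = 0" "pd 2 (pd 3 F) p = 0"
   "pd 3 (pd 0 F) p = 0" "pd 3 (pd 2 F) p = 0" "pd 3 (pd 3 F) p = 0"
   "pd (Suc 0) (pd 0 F) p = pd 0 (pd (Suc 0) F) p" "pd 2 (pd (Suc 0) F) p = pd (Suc 0) (pd 2 F) p" "pd 3 (pd (Suc 0) F) p = pd (Suc 0) (pd 3 F) p"
  shows "\<forall>l\<in>{0,1,2,3}. \<forall>i\<in>{0,1,2,3}. \<forall>j\<in>{0,1,2,3}. \<forall>k\<in>{0,1,2,3}. riem (gpr F) (gpr_inv F) l i j k p = 0"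
  unfolding riem_def lt4 by (simp add: CS assms algebra_simps)
end

lemma hess_formula:
  "hess (gpr F) (gpr_inv F) h i j p = pd i (pd j h) p
     - (1/2) * ((if j = 1 then pd i F p else 0) + (if i = 1 then pd j F p else 0)) * pd 0 h p
     + (if i = 1 \<and> j = 1 then (1/2) * (SF F 0 p * pd 0 h p + SF F 1 p * pd 1 h p + SF F 2 p * pd 2 h p + SF F 3 p * pd 3 h p) else 0)"
  unfolding hess_def lt4 by (simp add: christ_formula algebra_simps)

lemma lap_formula:
  "lap (gpr F) (gpr_inv F) h p = - F p * pd 0 (pd 0 h) p + (pd 0 (pd 1 h) p - 1/2 * pd 0 F p * pd 0 h p)
     + (pd 1 (pd 0 h) p - 1/2 * pd 0 F p * pd 0 h p) + pd 2 (pd 2 h) p + pd 3 (pd 3 h) p"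
  unfolding lap_def lt4 by (simp add: hess_formula gpr_inv_alt algebra_simps)

context fixes F :: "pt \<Rightarrow> real" and p :: pt and h :: "pt \<Rightarrow> real"
  assumes dF: "F differentiable (at p)" and dF1: "\<And>m. pd m F differentiable (at p)"
begin
lemma wein_vals:
  "weinstein (gpr F) (gpr_inv F) h 0 0 p = - pd 0 (pd 0 h) p"
  "weinstein (gpr F) (gpr_inv F) h 0 2 p = - pd 0 (pd 2 h) p"
  "weinstein (gpr F) (gpr_inv F) h 2 0 p = - pd 2 (pd 0 h) p"
  "weinstein (gpr F) (gpr_inv F) h 0 3 p = - pd 0 (pd 3 h) p"
  "weinstein (gpr F) (gpr_inv F) h 3 0 p = - pd 3 (pd 0 h) p"
  "weinstein (gpr F) (gpr_inv F) h 2 3 p = - pd 2 (pd 3 h) p"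
  "weinstein (gpr F) (gpr_inv F) h 3 2 p = - pd 3 (pd 2 h) p"
  "weinstein (gpr F) (gpr_inv F) h 2 2 p = - pd 2 (pd 2 h) p + lap (gpr F) (gpr_inv F) h p"
  "weinstein (gpr F) (gpr_inv F) h 3 3 p = - pd 3 (pd 3 h) p + lap (gpr F) (gpr_inv F) h p"
  "weinstein (gpr F) (gpr_inv F) h 0 1 p = h p * (1/2 * pd 0 (pd 0 F) p) - (pd 0 (pd 1 h) p - 1/2 * pd 0 F p * pd 0 h p) + lap (gpr F) (gpr_inv F) h p"
  "weinstein (gpr F) (gpr_inv F) h 1 0 p = h p * (1/2 * pd 0 (pd 0 F) p) - (pd 1 (pd 0 h) p - 1/2 * pd 0 F p * pd 0 h p) + lap (gpr F) (gpr_inv F) h p"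
  "weinstein (gpr F) (gpr_inv F) h 2 1 p = h p * (1/2 * pd 0 (pd 2 F) p) - (pd 2 (pd 1 h) p - 1/2 * pd 2 F p * pd 0 h p)"
  "weinstein (gpr F) (gpr_inv F) h 3 1 p = h p * (1/2 * pd 0 (pd 3 F) p) - (pd 3 (pd 1 h) p - 1/2 * pd 3 F p * pd 0 h p)"
  unfolding weinstein_def by (simp_all add: ricci_vals[OF dF dF1, unfolded One_nat_def] hess_formula gpr_alt algebra_simps)
end


lemma nilp:
  assumes z: "\<And>a b. a \<in> {0,2,3} \<Longrightarrow> b \<in> {0,2,3} \<Longrightarrow> ricci (gpr F) (gpr_inv F) a b p = 0"
    and z1: "ricci (gpr F) (gpr_inv F) 0 1 p = 0" "ricci (gpr F) (gpr_inv F) 1 0 p = 0"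
  shows "nilpotent4 (ricop (gpr F) (gpr_inv F) p)"
proof -
  define r where "r = (\<lambda>a b. ricci (gpr F) (gpr_inv F) a b p)"
  have rz: "r 0 0 = 0" "r 0 2 = 0" "r 0 3 = 0" "r 2 0 = 0" "r 2 2 = 0" "r 2 3 = 0"
     "r 3 0 = 0" "r 3 2 = 0" "r 3 3 = 0" "r 0 (Suc 0) = 0" "r (Suc 0) 0 = 0"
    using z z1 unfolding r_def by simp_all
  have A: "ricop (gpr F) (gpr_inv F) p = (\<lambda>a b. \<Sum>c<4. gpr_inv F a c p * r c b)"
    unfolding ricop_def r_def by simp
  have all4: "\<And>P. (\<forall>i<(4::nat). P i) = (P 0 \<and> P 1 \<and> P 2 \<and> P 3)"
    by (metis lt4 lessThan_iff insert_iff empty_iff)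
  show ?thesis unfolding nilpotent4_def A
    apply (rule exI[of _ "Suc (Suc (Suc 0))"])
    unfolding all4 by (simp add: lt4 gpr_inv_alt rz algebra_simps)
qed



lemma diff_transform_open:
  assumes "f differentiable (at x)" "open N" "x \<in> N" "\<And>y. y \<in> N \<Longrightarrow> f y = g y"
  shows "g differentiable (at x within S)"
proof -
  obtain f' where "(f has_derivative f') (at x)" using assms(1) unfolding differentiable_def by blast
  then have "(g has_derivative f') (at x)"
    by (rule has_derivative_transform_within_open[of f f' x UNIV N g]) (use assms in auto)
  then show ?thesis unfolding differentiable_def using has_derivative_at_withinI by blast
qed

lemma dd_affine:
  assumes "linear L"
  shows "dd b (\<lambda>z. f (c + L z)) z = dd (L b) f (c + L z)"
proof -
  have "(\<lambda>t. f (c + L (z + t *\<^sub>R b))) = (\<lambda>t. f (c + L z + t *\<^sub>R L b))"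
    using linear_add[OF assms] linear_cmul[OF assms] by (simp add: add.assoc)
  then show ?thesis unfolding dd_def by simp
qed

lemma foldr_dd_affine:
  assumes "linear L"
  shows "foldr dd bs (\<lambda>z. f (c + L z)) = (\<lambda>z. foldr dd (map L bs) f (c + L z))"
proof (induction bs)
  case Nil then show ?case by simp
next
  case (Cons b bs)
  show ?case by (simp add: Cons dd_affine[OF assms] fun_eq_iff)
qed

lemma smooth_local_affine:
  fixes \<psi> :: "'a::euclidean_space \<Rightarrow> real" and U :: "pt set"
  assumes U: "open U"
    and loc: "\<And>z0. z0 \<in> S \<Longrightarrow> \<exists>(c::pt) (L::'a \<Rightarrow> pt) \<phi> N. linear L \<and> L ` Basis \<subseteq> Basis \<and> smooth_on U \<phi>
               \<and> open N \<and> z0 \<in> N \<and> (\<forall>z\<in>N. c + L z \<in> U \<and> \<psi> z = \<phi> (c + L z))"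
  shows "smooth_on S \<psi>"
  unfolding smooth_on_def
proof (intro allI impI)
  fix bs :: "'a list" assume bs: "set bs \<subseteq> Basis"
  show "foldr dd bs \<psi> differentiable_on S"
    unfolding differentiable_on_def
  proof
    fix z0 assume "z0 \<in> S"
    then obtain c L \<phi> N where L: "linear L" "L ` Basis \<subseteq> Basis" and sp: "smooth_on U \<phi>"
      and N: "open N" "z0 \<in> N" and eq: "\<And>z. z \<in> N \<Longrightarrow> c + L z \<in> U \<and> \<psi> z = \<phi> (c + L z)"
      using loc by metis
    have e1: "foldr dd bs \<psi> z = foldr dd (map L bs) \<phi> (c + L z)" if "z \<in> N" for z
    proof -
      have "foldr dd bs \<psi> z = foldr dd bs (\<lambda>z. \<phi> (c + L z)) z"
        by (rule foldr_dd_cong_open[OF N(1)]) (use eq that in auto)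
      then show ?thesis by (simp add: foldr_dd_affine[OF L(1)])
    qed
    have sb: "set (map L bs) \<subseteq> Basis" using bs L(2) by auto
    have "foldr dd (map L bs) \<phi> differentiable_on U" using sp sb unfolding smooth_on_def by blast
    then have "foldr dd (map L bs) \<phi> differentiable (at (c + L z0))"
      using eq[OF N(2)] U by (simp add: differentiable_on_eq_differentiable_at)
    moreover have "(\<lambda>z. c + L z) differentiable (at z0)"
      using L(1) by (intro differentiable_add differentiable_const linear_imp_differentiable)
    ultimately have "(\<lambda>z. foldr dd (map L bs) \<phi> (c + L z)) differentiable (at z0)"
      by (rule differentiable_compose)
    then show "foldr dd bs \<psi> differentiable (at z0 within S)"
      by (rule diff_transform_open[OF _ N(1) N(2)]) (simp add: e1)
  qed
qed

lemma smooth_lincomb: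
  fixes f g :: "pt \<Rightarrow> real"
  assumes U: "open U" and sf: "smooth_on U f" and sg: "smooth_on U g"
  shows "smooth_on U (\<lambda>p. f p + c * g p)"
proof -
  have eq: "\<forall>q\<in>U. foldr dd bs (\<lambda>p. f p + c * g p) q = foldr dd bs f q + c * foldr dd bs g q"
    if "set bs \<subseteq> Basis" for bs using that
  proof (induction bs)
    case Nil then show ?case by simp
  next
    case (Cons b bs)
    then have bs: "set bs \<subseteq> Basis" by simp
    show ?case
    proof
      fix q assume q: "q \<in> U"
      have df: "foldr dd bs f differentiable (at q)" "foldr dd bs g differentiable (at q)"
        using sf sg bs q U unfolding smooth_on_def by (auto simp: differentiable_on_eq_differentiable_at)
      have "foldr dd (b # bs) (\<lambda>p. f p + c * g p) q = dd b (\<lambda>q. foldr dd bs f q + c * foldr dd bs g q) q"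
        using dd_cong_open[OF U q, of "foldr dd bs (\<lambda>p. f p + c * g p)"] Cons.IH[OF bs] by simp
      also have "\<dots> = dd b (foldr dd bs f) q + c * dd b (foldr dd bs g) q"
        using df by (simp add: dd_add dd_cmult)
      finally show "foldr dd (b # bs) (\<lambda>p. f p + c * g p) q = foldr dd (b # bs) f q + c * foldr dd (b # bs) g q"
        by simp
    qed
  qed
  show ?thesis unfolding smooth_on_def
  proof (intro allI impI)
    fix bs :: "pt list" assume bs: "set bs \<subseteq> Basis"
    show "foldr dd bs (\<lambda>p. f p + c * g p) differentiable_on U"
      unfolding differentiable_on_def
    proof
      fix q assume q: "q \<in> U"
      have df: "foldr dd bs f differentiable (at q)" "foldr dd bs g differentiable (at q)"
        using sf sg bs q U unfolding smooth_on_def by (auto simp: differentiable_on_eq_differentiable_at)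
      then have "(\<lambda>q. foldr dd bs f q + c * foldr dd bs g q) differentiable (at q)" by simp
      then show "foldr dd bs (\<lambda>p. f p + c * g p) differentiable (at q within U)"
        by (rule diff_transform_open[OF _ U q]) (use eq[OF bs] in simp)
    qed
  qed
qed

lemma frechet_decomp:
  assumes "(f has_derivative f') (at x)"
  shows "f' (a, b, c, e) = a * pd 0 f x + b * pd 1 f x + c * pd 2 f x + e * pd 3 f x"
proof -
  have l: "linear f'" using assms has_derivative_linear by blast
  have "(a, b, c, e) = a *\<^sub>R ecoord 0 + b *\<^sub>R ecoord 1 + c *\<^sub>R ecoord 2 + e *\<^sub>R ecoord 3"
    by (simp add: ecoord_def)
  then have "f' (a, b, c, e) = a * f' (ecoord 0) + b * f' (ecoord 1) + c * f' (ecoord 2) + e * f' (ecoord 3)"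
    by (simp add: linear_add[OF l] linear_cmul[OF l])
  then show ?thesis unfolding pd_def dd_frechet[OF assms] .
qed

lemma const_dir:
  fixes f :: "pt \<Rightarrow> real"
  assumes U: "open U" "convex U" and df: "\<And>x. x \<in> U \<Longrightarrow> f differentiable (at x)"
    and p: "p \<in> U" and q: "q \<in> U" and qp: "q - p = (a, b, c, e)"
    and z: "\<And>x. x \<in> U \<Longrightarrow> a * pd 0 f x + b * pd 1 f x + c * pd 2 f x + e * pd 3 f x = 0"
  shows "f p = f q"
proof -
  define \<phi> where "\<phi> t = f (p + t *\<^sub>R (q - p))" for t
  have "DERIV \<phi> t :> 0" if "0 \<le> t" "t \<le> 1" for t
  proof -
    have e: "p + t *\<^sub>R (q - p) = (1 - t) *\<^sub>R p + t *\<^sub>R q" by (simp add: algebra_simps)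
    have "(1 - t) *\<^sub>R p + t *\<^sub>R q \<in> U"
      using U(2) p q that unfolding convex_alt by blast
    then have inU: "p + t *\<^sub>R (q - p) \<in> U" using e by simp
    define r where "r = p + t *\<^sub>R (q - p)"
    obtain f' where d: "(f has_derivative f') (at r)"
      using df[OF inU] unfolding differentiable_def r_def by blast
    have "DERIV \<phi> t :> f' (q - p)" unfolding \<phi>_def by (rule line_DERIV[OF d[unfolded r_def]])
    moreover have "f' (a, b, c, e) = 0" unfolding frechet_decomp[OF d] using z[OF inU] unfolding r_def .
    ultimately show ?thesis using qp by simp
  qed
  then obtain t where "\<phi> 1 - \<phi> 0 = (1 - 0) * 0" using MVT2[of 0 1 \<phi> "\<lambda>_. 0"] by force
  then show ?thesis unfolding \<phi>_def by simp
qed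



lemma pd_zero_open:
  assumes "open S" "q \<in> S" "\<And>x. x \<in> S \<Longrightarrow> f x = 0"
  shows "pd i f q = 0"
  using dd_cong_open[OF assms(1,2), of f "\<lambda>x. 0"] assms(3) unfolding pd_def by (simp add: dd_const)

lemma pd_eq_open:
  assumes "open S" "q \<in> S" "\<And>x. x \<in> S \<Longrightarrow> f x = g x"
  shows "pd i f q = pd i g q"
  using dd_cong_open[OF assms(1,2), of f g] assms(3) unfolding pd_def by simp

locale setting =
  fixes U :: "pt set" and F h :: "pt \<Rightarrow> real"
  assumes U_open: "open U" and U_convex: "convex U"
    and sF: "smooth_on U F" and sh: "smooth_on U h"
    and h_pos: "\<forall>p\<in>U. h p > 0"
    and vacuum: "\<forall>p\<in>U. \<forall>i<4. \<forall>j<4. weinstein (gpr F) (gpr_inv F) h i j p = 0"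
    and nonflat: "\<forall>W. open W \<and> W \<noteq> {} \<and> W \<subseteq> U \<longrightarrow>
                    (\<exists>p\<in>W. \<exists>l<4. \<exists>i<4. \<exists>j<4. \<exists>k<4. riem (gpr F) (gpr_inv F) l i j k p \<noteq> 0)"
begin

lemma DU: "smooth_on U f \<Longrightarrow> q \<in> U \<Longrightarrow> f differentiable (at q)"
  using smooth_diffble U_open by blast

lemma CL: "smooth_on U f \<Longrightarrow> q \<in> U \<Longrightarrow> pd i (pd j f) q = pd j (pd i f) q"
  using clairaut U_open by blast

lemma sm: "smooth_on U F" "smooth_on U h" "smooth_on U (pd i f) = smooth_on U (pd i f)"
  using sF sh by auto

lemmas smp = sF sh smooth_pd

lemma basic:
  assumes q: "q \<in> U"
  shows "pd 0 (pd 0 h) q = 0" "pd 0 (pd 2 h) q = 0" "pd 2 (pd 0 h) q = 0"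
    "pd 0 (pd 3 h) q = 0" "pd 3 (pd 0 h) q = 0" "pd 2 (pd 3 h) q = 0" "pd 3 (pd 2 h) q = 0"
    "pd 3 (pd 3 h) q = pd 2 (pd 2 h) q"
    "2 * pd 1 (pd 0 h) q - pd 0 F q * pd 0 h q + pd 2 (pd 2 h) q = 0"
    "h q * pd 0 (pd 0 F) q + 3 * pd 2 (pd 2 h) q = 0"
    "h q * (1/2 * pd 0 (pd 2 F) q) - (pd 2 (pd 1 h) q - 1/2 * pd 2 F q * pd 0 h q) = 0"
    "h q * (1/2 * pd 0 (pd 3 F) q) - (pd 3 (pd 1 h) q - 1/2 * pd 3 F q * pd 0 h q) = 0"
proof -
  have dF: "F differentiable (at q)" "\<And>m. pd m F differentiable (at q)"
    using DU q smp by blast+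
  have v: "\<And>i j. i < 4 \<Longrightarrow> j < 4 \<Longrightarrow> weinstein (gpr F) (gpr_inv F) h i j q = 0"
    using vacuum q by blast
  note wv = wein_vals[OF dF, of h]
  have w00: "pd 0 (pd 0 h) q = 0" using v[of 0 0] wv(1) by simp
  have w02: "pd 0 (pd 2 h) q = 0" using v[of 0 2] wv(2) by simp
  have w20: "pd 2 (pd 0 h) q = 0" using v[of 2 0] wv(3) by simp
  have w03: "pd 0 (pd 3 h) q = 0" using v[of 0 3] wv(4) by simp
  have w30: "pd 3 (pd 0 h) q = 0" using v[of 3 0] wv(5) by simp
  have w23: "pd 2 (pd 3 h) q = 0" using v[of 2 3] wv(6) by simp
  have w32: "pd 3 (pd 2 h) q = 0" using v[of 3 2] wv(7) by simp
  have w22: "pd 2 (pd 2 h) q = lap (gpr F) (gpr_inv F) h q" using v[of 2 2] wv(8) by simp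
  have w33: "pd 3 (pd 3 h) q = lap (gpr F) (gpr_inv F) h q" using v[of 3 3] wv(9) by simp
  have w01: "h q * (1/2 * pd 0 (pd 0 F) q) - (pd 0 (pd 1 h) q - 1/2 * pd 0 F q * pd 0 h q) + lap (gpr F) (gpr_inv F) h q = 0"
    using v[of 0 1] wv(10) by simp
  have w10: "h q * (1/2 * pd 0 (pd 0 F) q) - (pd 1 (pd 0 h) q - 1/2 * pd 0 F q * pd 0 h q) + lap (gpr F) (gpr_inv F) h q = 0"
    using v[of 1 0] wv(11) by simp
  have w21: "h q * (1/2 * pd 0 (pd 2 F) q) - (pd 2 (pd 1 h) q - 1/2 * pd 2 F q * pd 0 h q) = 0"
    using v[of 2 1] wv(12) by simp
  have w31: "h q * (1/2 * pd 0 (pd 3 F) q) - (pd 3 (pd 1 h) q - 1/2 * pd 3 F q * pd 0 h q) = 0"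
    using v[of 3 1] wv(13) by simp
  have lf: "lap (gpr F) (gpr_inv F) h q = - F q * pd 0 (pd 0 h) q + (pd 0 (pd 1 h) q - 1/2 * pd 0 F q * pd 0 h q)
     + (pd 1 (pd 0 h) q - 1/2 * pd 0 F q * pd 0 h q) + pd 2 (pd 2 h) q + pd 3 (pd 3 h) q"
    by (rule lap_formula)
  show "pd 0 (pd 0 h) q = 0" "pd 0 (pd 2 h) q = 0" "pd 2 (pd 0 h) q = 0"
    "pd 0 (pd 3 h) q = 0" "pd 3 (pd 0 h) q = 0" "pd 2 (pd 3 h) q = 0" "pd 3 (pd 2 h) q = 0"
    "pd 3 (pd 3 h) q = pd 2 (pd 2 h) q" by (simp_all add: w00 w02 w20 w03 w30 w23 w32 w22 w33)
  show "h q * (1/2 * pd 0 (pd 2 F) q) - (pd 2 (pd 1 h) q - 1/2 * pd 2 F q * pd 0 h q) = 0"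
    "h q * (1/2 * pd 0 (pd 3 F) q) - (pd 3 (pd 1 h) q - 1/2 * pd 3 F q * pd 0 h q) = 0"
    using w21 w31 by simp_all
  show "2 * pd 1 (pd 0 h) q - pd 0 F q * pd 0 h q + pd 2 (pd 2 h) q = 0"
    "h q * pd 0 (pd 0 F) q + 3 * pd 2 (pd 2 h) q = 0"
  proof -
    have e1: "h q * (1/2 * pd 0 (pd 0 F) q) = (h q * pd 0 (pd 0 F) q) / 2" by simp
    have e2: "1/2 * pd 0 F q * pd 0 h q = (pd 0 F q * pd 0 h q) / 2" by simp
    have lf': "lap (gpr F) (gpr_inv F) h q = (pd 0 (pd 1 h) q - (pd 0 F q * pd 0 h q) / 2)
     + (pd 1 (pd 0 h) q - (pd 0 F q * pd 0 h q) / 2) + pd 2 (pd 2 h) q + pd 3 (pd 3 h) q"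
      using lf w00 by simp
    show "2 * pd 1 (pd 0 h) q - pd 0 F q * pd 0 h q + pd 2 (pd 2 h) q = 0"
      "h q * pd 0 (pd 0 F) q + 3 * pd 2 (pd 2 h) q = 0"
      using w01 w10 w22 w33 lf' unfolding e1 e2 by linarith+
  qed
qed


lemmas pdr = pd_add pd_diff pd_mult pd_cmult pd_cdiv pd_minus pd_const

lemma cont_pd: "continuous_on U (pd i f)" if "smooth_on U f"
proof -
  have "\<And>x. x \<in> U \<Longrightarrow> isCont (pd i f) x"
    using DU[of "pd i f"] smooth_pd[OF that] differentiable_imp_continuous_within by blast
  then show ?thesis by (simp add: continuous_at_imp_continuous_on)
qed

lemma open_nz: "open {x \<in> U. pd i f x \<noteq> 0}" if "smooth_on U f"
proof -
  have "{x \<in> U. pd i f x \<noteq> 0} = U \<inter> pd i f -` (- {0})" by auto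
  then show ?thesis using continuous_open_preimage[OF cont_pd[OF that, of i] U_open, of "-{0}"] by auto
qed

lemma step1:
  assumes q: "q \<in> U"
  shows "pd 0 h q = 0"
proof (rule ccontr)
  assume nz: "pd 0 h q \<noteq> 0"
  define W where "W = {x \<in> U. pd 0 h x \<noteq> 0}"
  have Wo: "open W" unfolding W_def using open_nz sh by blast
  have WU: "W \<subseteq> U" "q \<in> W" using q nz unfolding W_def by auto
  have F00a: "pd 0 (pd 0 F) x * pd 0 h x = 0" if x: "x \<in> U" for x
  proof -
    have "pd 0 (\<lambda>x. 2 * pd 1 (pd 0 h) x - pd 0 F x * pd 0 h x + pd 2 (pd 2 h) x) x = 0"
      by (rule pd_zero_open[OF U_open x]) (use basic(9) in simp)
    then have 1: "2 * pd 0 (pd 1 (pd 0 h)) x - (pd 0 (pd 0 F) x * pd 0 h x + pd 0 F x * pd 0 (pd 0 h) x)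
       + pd 0 (pd 2 (pd 2 h)) x = 0"
      by (simp add: pdr DU x smp)
    have 2: "pd 0 (pd 1 (pd 0 h)) x = 0"
      using CL[of "pd 0 h" x 0 1] smp x pd_zero_open[OF U_open x, of "pd 0 (pd 0 h)" 1] basic(1) by simp
    have 3: "pd 0 (pd 2 (pd 2 h)) x = 0"
      using CL[of "pd 2 h" x 0 2] smp x pd_zero_open[OF U_open x, of "pd 0 (pd 2 h)" 2] basic(2) by simp
    show ?thesis using 1 2 3 basic(1)[OF x] by simp
  qed
  have aW: "pd 0 h x \<noteq> 0" "x \<in> U" if "x \<in> W" for x using that unfolding W_def by auto
  have F00W: "pd 0 (pd 0 F) x = 0" if "x \<in> W" for x using F00a[OF aW(2)[OF that]] aW(1)[OF that] by simp
  have H22W: "pd 2 (pd 2 h) x = 0" if "x \<in> W" for x using basic(10)[OF aW(2)[OF that]] F00W[OF that] by simp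
  have F20W: "pd 2 (pd 0 F) x = 0" if xW: "x \<in> W" for x
  proof -
    have x: "x \<in> U" using aW(2)[OF xW] .
    have "pd 2 (\<lambda>x. 2 * pd 1 (pd 0 h) x - pd 0 F x * pd 0 h x + pd 2 (pd 2 h) x) x = 0"
      by (rule pd_zero_open[OF U_open x]) (use basic(9) in simp)
    then have 1: "2 * pd 2 (pd 1 (pd 0 h)) x - (pd 2 (pd 0 F) x * pd 0 h x + pd 0 F x * pd 2 (pd 0 h) x)
       + pd 2 (pd 2 (pd 2 h)) x = 0"
      by (simp add: pdr DU x smp)
    have 2: "pd 2 (pd 1 (pd 0 h)) x = 0"
      using CL[of "pd 0 h" x 2 1] smp x pd_zero_open[OF U_open x, of "pd 2 (pd 0 h)" 1] basic(3) by simp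
    have 3: "pd 2 (pd 2 (pd 2 h)) x = 0"
      using pd_zero_open[OF Wo xW, of "pd 2 (pd 2 h)" 2] H22W by simp
    show ?thesis using 1 2 3 basic(3)[OF x] aW(1)[OF xW] by simp
  qed
  have F30W: "pd 3 (pd 0 F) x = 0" if xW: "x \<in> W" for x
  proof -
    have x: "x \<in> U" using aW(2)[OF xW] .
    have "pd 3 (\<lambda>x. 2 * pd 1 (pd 0 h) x - pd 0 F x * pd 0 h x + pd 2 (pd 2 h) x) x = 0"
      by (rule pd_zero_open[OF U_open x]) (use basic(9) in simp)
    then have 1: "2 * pd 3 (pd 1 (pd 0 h)) x - (pd 3 (pd 0 F) x * pd 0 h x + pd 0 F x * pd 3 (pd 0 h) x)
       + pd 3 (pd 2 (pd 2 h)) x = 0"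
      by (simp add: pdr DU x smp)
    have 2: "pd 3 (pd 1 (pd 0 h)) x = 0"
      using CL[of "pd 0 h" x 3 1] smp x pd_zero_open[OF U_open x, of "pd 3 (pd 0 h)" 1] basic(5) by simp
    have 3: "pd 3 (pd 2 (pd 2 h)) x = 0"
      using pd_zero_open[OF Wo xW, of "pd 2 (pd 2 h)" 3] H22W by simp
    show ?thesis using 1 2 3 basic(5)[OF x] aW(1)[OF xW] by simp
  qed
  have F02W: "pd 0 (pd 2 F) x = 0" if xW: "x \<in> W" for x
    using CL[OF sF aW(2)[OF xW], of 0 2] F20W[OF xW] by simp
  have F03W: "pd 0 (pd 3 F) x = 0" if xW: "x \<in> W" for x
    using CL[OF sF aW(2)[OF xW], of 0 3] F30W[OF xW] by simp
  have F22W: "pd 2 (pd 2 F) x = 0" and F32W: "pd 3 (pd 2 F) x = 0" if xW: "x \<in> W" for x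
  proof -
    have x: "x \<in> U" using aW(2)[OF xW] .
    have e: "pd k (\<lambda>x. h x * (1/2 * pd 0 (pd 2 F) x) - (pd 2 (pd 1 h) x - 1/2 * pd 2 F x * pd 0 h x)) x = 0" for k
      by (rule pd_zero_open[OF U_open x]) (use basic(11) in simp)
    have sym21: "pd k (pd 2 (pd 1 h)) x = pd k (pd 1 (pd 2 h)) x" for k
      by (rule pd_eq_open[OF U_open x]) (use CL[OF sh] in simp)
    have z02: "pd k (pd 0 (pd 2 F)) x = 0" for k using pd_zero_open[OF Wo xW] F02W by blast
    have 2: "pd 2 (pd 2 (pd 1 h)) x = 0"
      using sym21[of 2] CL[of "pd 2 h" x 2 1] smp x pd_zero_open[OF Wo xW, of "pd 2 (pd 2 h)" 1] H22W by simp
    have 3: "pd 3 (pd 2 (pd 1 h)) x = 0"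
      using sym21[of 3] CL[of "pd 2 h" x 3 1] smp x pd_zero_open[OF U_open x, of "pd 3 (pd 2 h)" 1] basic(7) by simp
    from e[of 2] have "pd 2 h x * (1/2 * pd 0 (pd 2 F) x) + h x * (1/2 * pd 2 (pd 0 (pd 2 F)) x)
       - (pd 2 (pd 2 (pd 1 h)) x - 1/2 * (pd 2 (pd 2 F) x * pd 0 h x + pd 2 F x * pd 2 (pd 0 h) x)) = 0"
      by (simp add: pdr DU x smp field_simps)
    then show "pd 2 (pd 2 F) x = 0" using 2 z02 F02W[OF xW] basic(3)[OF x] aW(1)[OF xW] by simp
    from e[of 3] have "pd 3 h x * (1/2 * pd 0 (pd 2 F) x) + h x * (1/2 * pd 3 (pd 0 (pd 2 F)) x)
       - (pd 3 (pd 2 (pd 1 h)) x - 1/2 * (pd 3 (pd 2 F) x * pd 0 h x + pd 2 F x * pd 3 (pd 0 h) x)) = 0"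
      by (simp add: pdr DU x smp field_simps)
    then show "pd 3 (pd 2 F) x = 0" using 3 z02 F02W[OF xW] basic(5)[OF x] aW(1)[OF xW] by simp
  qed
  have F33W: "pd 3 (pd 3 F) x = 0" if xW: "x \<in> W" for x
  proof -
    have x: "x \<in> U" using aW(2)[OF xW] .
    have e: "pd k (\<lambda>x. h x * (1/2 * pd 0 (pd 3 F) x) - (pd 3 (pd 1 h) x - 1/2 * pd 3 F x * pd 0 h x)) x = 0" for k
      by (rule pd_zero_open[OF U_open x]) (use basic(12) in simp)
    have sym31: "pd k (pd 3 (pd 1 h)) x = pd k (pd 1 (pd 3 h)) x" for k
      by (rule pd_eq_open[OF U_open x]) (use CL[OF sh] in simp)
    have z03: "pd k (pd 0 (pd 3 F)) x = 0" for k using pd_zero_open[OF Wo xW] F03W by blast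
    have H33W: "\<And>y. y \<in> W \<Longrightarrow> pd 3 (pd 3 h) y = 0" using basic(8) H22W aW(2) by simp
    have 3: "pd 3 (pd 3 (pd 1 h)) x = 0"
      using sym31[of 3] CL[of "pd 3 h" x 3 1] smp x pd_zero_open[OF Wo xW, of "pd 3 (pd 3 h)" 1] H33W by simp
    from e[of 3] have "pd 3 h x * (1/2 * pd 0 (pd 3 F) x) + h x * (1/2 * pd 3 (pd 0 (pd 3 F)) x)
       - (pd 3 (pd 3 (pd 1 h)) x - 1/2 * (pd 3 (pd 3 F) x * pd 0 h x + pd 3 F x * pd 3 (pd 0 h) x)) = 0"
      by (simp add: pdr DU x smp field_simps)
    then show "pd 3 (pd 3 F) x = 0" using 3 z03 F03W[OF xW] basic(5)[OF x] aW(1)[OF xW] by simp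
  qed
  have F23W: "pd 2 (pd 3 F) x = 0" if xW: "x \<in> W" for x
    using CL[OF sF aW(2)[OF xW], of 2 3] F32W[OF xW] by simp
  have flatW: "riem (gpr F) (gpr_inv F) l i j k x = 0"
    if xW: "x \<in> W" and "l < 4" "i < 4" "j < 4" "k < 4" for x l i j k
  proof -
    have x: "x \<in> U" using aW(2)[OF xW] .
    have dF: "F differentiable (at x)" "\<And>m. pd m F differentiable (at x)"
      using DU x smp by blast+
    have "\<forall>l\<in>{0,1,2,3}. \<forall>i\<in>{0,1,2,3}. \<forall>j\<in>{0,1,2,3}. \<forall>k\<in>{0,1,2,3}. riem (gpr F) (gpr_inv F) l i j k x = 0"
      by (rule flat[OF dF F00W[OF xW] F02W[OF xW] F03W[OF xW] F20W[OF xW] F22W[OF xW] F23W[OF xW]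
          F30W[OF xW] F32W[OF xW] F33W[OF xW]]) (use CL[OF sF x] in simp_all)
    moreover have "l \<in> {0,1,2,3}" "i \<in> {0,1,2,3}" "j \<in> {0,1,2,3}" "k \<in> {0,1,2,3}"
      using that by auto
    ultimately show ?thesis by blast
  qed
  have "\<exists>p\<in>W. \<exists>l<4. \<exists>i<4. \<exists>j<4. \<exists>k<4. riem (gpr F) (gpr_inv F) l i j k p \<noteq> 0"
    using nonflat Wo WU by blast
  then show False using flatW by blast
qed

lemma step2:
  assumes q: "q \<in> U"
  shows "pd 2 (pd 2 h) q = 0" "pd 0 (pd 0 F) q = 0"
proof -
  have a0: "\<And>x. x \<in> U \<Longrightarrow> pd 0 h x = 0" using step1 by blast
  have F002: "pd 0 (pd 0 (pd 2 F)) x = 0" if x: "x \<in> U" for x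
  proof -
    have e: "pd 0 (\<lambda>x. h x * (1/2 * pd 0 (pd 2 F) x) - (pd 2 (pd 1 h) x - 1/2 * pd 2 F x * pd 0 h x)) x = 0"
      by (rule pd_zero_open[OF U_open x]) (use basic(11) in simp)
    have s1: "pd 2 (pd 0 (pd 1 h)) x = pd 2 (pd 1 (pd 0 h)) x"
      by (rule pd_eq_open[OF U_open x]) (use CL[OF sh] in simp)
    have s2: "pd 2 (pd 1 (pd 0 h)) x = 0"
      by (rule pd_zero_open[OF U_open x]) (use pd_zero_open[OF U_open] a0 in blast)
    have 2: "pd 0 (pd 2 (pd 1 h)) x = 0"
      using CL[of "pd 1 h" x 0 2] smp x s1 s2 by simp
    from e have "pd 0 h x * (1/2 * pd 0 (pd 2 F) x) + h x * (1/2 * pd 0 (pd 0 (pd 2 F)) x)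
       - (pd 0 (pd 2 (pd 1 h)) x - 1/2 * (pd 0 (pd 2 F) x * pd 0 h x + pd 2 F x * pd 0 (pd 0 h) x)) = 0"
      by (simp add: pdr DU x smp field_simps)
    moreover have "h x > 0" using h_pos x by blast
    ultimately show ?thesis using 2 a0[OF x] basic(1)[OF x] by simp
  qed
  have F00h2: "pd 2 h x * pd 0 (pd 0 F) x = 0" if x: "x \<in> U" for x
  proof -
    have e: "pd 2 (\<lambda>x. h x * pd 0 (pd 0 F) x + 3 * pd 2 (pd 2 h) x) x = 0"
      by (rule pd_zero_open[OF U_open x]) (use basic(10) in simp)
    have s1: "pd 0 (pd 2 (pd 0 F)) x = pd 0 (pd 0 (pd 2 F)) x"
      by (rule pd_eq_open[OF U_open x]) (use CL[OF sF] in simp)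
    have 1: "pd 2 (pd 0 (pd 0 F)) x = 0"
      using CL[of "pd 0 F" x 2 0] smp x s1 F002[OF x] by simp
    have s2: "pd 2 (pd 2 (pd 2 h)) x = pd 2 (pd 3 (pd 3 h)) x"
      by (rule pd_eq_open[OF U_open x]) (use basic(8) in simp)
    have 2: "pd 2 (pd 2 (pd 2 h)) x = 0"
      using s2 CL[of "pd 3 h" x 2 3] smp x pd_zero_open[OF U_open x, of "pd 2 (pd 3 h)" 3] basic(6) by simp
    from e have "pd 2 h x * pd 0 (pd 0 F) x + h x * pd 2 (pd 0 (pd 0 F)) x + 3 * pd 2 (pd 2 (pd 2 h)) x = 0"
      by (simp add: pdr DU x smp)
    then show ?thesis using 1 2 by simp
  qed
  show H: "pd 2 (pd 2 h) q = 0"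
  proof (rule ccontr)
    assume nz: "pd 2 (pd 2 h) q \<noteq> 0"
    define V where "V = {x \<in> U. pd 2 (pd 2 h) x \<noteq> 0}"
    have Vo: "open V" unfolding V_def using open_nz smp by blast
    have qV: "q \<in> V" using q nz unfolding V_def by auto
    have "pd 2 h x = 0" if xV: "x \<in> V" for x
    proof -
      have x: "x \<in> U" "pd 2 (pd 2 h) x \<noteq> 0" using xV unfolding V_def by auto
      have "pd 0 (pd 0 F) x \<noteq> 0" using basic(10)[OF x(1)] x(2) by auto
      then show ?thesis using F00h2[OF x(1)] by simp
    qed
    then have "pd 2 (pd 2 h) q = 0" using pd_zero_open[OF Vo qV] by blast
    then show False using nz by simp
  qed
  have "h q > 0" using h_pos q by blast
  then show "pd 0 (pd 0 F) q = 0" using basic(10)[OF q] H by simp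
qed
end


definition cu :: "pt \<Rightarrow> real" where "cu p = fst p"
definition cx :: "pt \<Rightarrow> real" where "cx p = fst (snd (snd p))"
definition cy :: "pt \<Rightarrow> real" where "cy p = snd (snd (snd p))"

lemma lin_cu: "linear cu" unfolding cu_def by (simp add: linear_iff)
lemma lin_cx: "linear cx" unfolding cx_def by (simp add: linear_iff)
lemma lin_cy: "linear cy" unfolding cy_def by (simp add: linear_iff)

lemma diff_coord: "cu differentiable (at x)" "cx differentiable (at x)" "cy differentiable (at x)"
  using lin_cu lin_cx lin_cy linear_imp_differentiable by blast+

lemma pd_linear:
  assumes "linear f"
  shows "pd i f x = f (ecoord i)"
proof -
  have "(\<lambda>t. f (x + t *\<^sub>R ecoord i)) = (\<lambda>t. f x + t * f (ecoord i))"
    using linear_add[OF assms] linear_cmul[OF assms] by auto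
  moreover have "((\<lambda>t. f x + t * f (ecoord i)) has_real_derivative f (ecoord i)) (at 0)"
    by (auto intro!: derivative_eq_intros)
  ultimately show ?thesis unfolding pd_def dd_def by (simp add: DERIV_imp_deriv)
qed

lemma pd_coord:
  "pd i cu x = (if i = 0 then 1 else 0)"
  "pd i cx x = (if i = 2 then 1 else 0)"
  "pd i cy x = (if i = 0 \<or> i = 1 \<or> i = 2 then 0 else 1)"
  by (simp_all add: pd_linear lin_cu lin_cx lin_cy) (simp_all add: cu_def cx_def cy_def ecoord_def)

lemma smooth_v:
  fixes \<psi> :: "real \<Rightarrow> real" and U :: "pt set"
  assumes U: "open U"
    and H: "\<And>u0 v0 x0 y0. (u0,v0,x0,y0) \<in> U \<Longrightarrow> \<exists>\<phi>. smooth_on U \<phi> \<and>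
              (\<forall>z. (u0, z, x0, y0) \<in> U \<longrightarrow> \<psi> z = \<phi> (u0, z, x0, y0))"
  shows "smooth_on ((\<lambda>(u,v,x,y). v) ` U) \<psi>"
proof (rule smooth_local_affine[OF U])
  fix z0 assume "z0 \<in> (\<lambda>(u,v,x,y). v) ` U"
  then obtain u0 x0 y0 where p0: "(u0,z0,x0,y0) \<in> U" by auto
  obtain \<phi> where ph: "smooth_on U \<phi>" "\<forall>z. (u0,z,x0,y0) \<in> U \<longrightarrow> \<psi> z = \<phi> (u0,z,x0,y0)"
    using H[OF p0] by blast
  define c :: pt where "c = (u0, 0, x0, y0)"
  define L :: "real \<Rightarrow> pt" where "L z = z *\<^sub>R ecoord 1" for z
  have cL: "c + L z = (u0, z, x0, y0)" for z by (simp add: c_def L_def ecoord_def)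
  have lin: "linear L" unfolding L_def by (simp add: linear_iff algebra_simps)
  have LB: "L ` Basis \<subseteq> Basis" by (simp add: L_def ecoord_Basis)
  define N where "N = {z. (u0, z, x0, y0) \<in> U}"
  have "continuous_on UNIV (\<lambda>z::real. (u0, z, x0, y0))" by (intro continuous_intros)
  then have No: "open N" using continuous_on_open_vimage[of UNIV "\<lambda>z::real. (u0, z, x0, y0)"] U
    unfolding N_def by (simp add: vimage_def)
  show "\<exists>c L \<phi> N. linear L \<and> L ` Basis \<subseteq> Basis \<and> smooth_on U \<phi> \<and> open N \<and> z0 \<in> N
        \<and> (\<forall>z\<in>N. c + L z \<in> U \<and> \<psi> z = \<phi> (c + L z))"
    using lin LB ph No p0 unfolding cL N_def
    by (intro exI[of _ c] exI[of _ L] exI[of _ \<phi>] exI[of _ N]) (auto simp: cL N_def)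
qed

lemma smooth_vxy:
  fixes \<psi> :: "real \<times> real \<times> real \<Rightarrow> real" and U :: "pt set"
  assumes U: "open U"
    and H: "\<And>u0 w0. (u0, w0) \<in> U \<Longrightarrow> \<exists>\<phi>. smooth_on U \<phi> \<and>
              (\<forall>w. (u0, w) \<in> U \<longrightarrow> \<psi> w = \<phi> (u0, w))"
  shows "smooth_on ((\<lambda>(u,v,x,y). (v,x,y)) ` U) \<psi>"
proof (rule smooth_local_affine[OF U])
  fix z0 assume "z0 \<in> (\<lambda>(u,v,x,y). (v,x,y)) ` U"
  then obtain u0 where p0: "(u0,z0) \<in> U" by auto
  obtain \<phi> where ph: "smooth_on U \<phi>" "\<forall>w. (u0,w) \<in> U \<longrightarrow> \<psi> w = \<phi> (u0,w)"
    using H[OF p0] by blast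
  define c :: pt where "c = (u0, 0)"
  define L :: "real \<times> real \<times> real \<Rightarrow> pt" where "L w = (0, w)" for w
  have cL: "c + L z = (u0, z)" for z by (simp add: c_def L_def)
  have lin: "linear L" unfolding L_def by (simp add: linear_iff)
  have LB: "L ` Basis \<subseteq> Basis" by (auto simp: L_def Basis_prod_def)
  define N where "N = {w. (u0, w) \<in> U}"
  have "continuous_on UNIV (\<lambda>w::real\<times>real\<times>real. (u0, w))" by (intro continuous_intros)
  then have No: "open N" using continuous_on_open_vimage[of UNIV "\<lambda>w::real\<times>real\<times>real. (u0, w)"] U
    unfolding N_def by (simp add: vimage_def)
  show "\<exists>c L \<phi> N. linear L \<and> L ` Basis \<subseteq> Basis \<and> smooth_on U \<phi> \<and> open N \<and> z0 \<in> N
        \<and> (\<forall>z\<in>N. c + L z \<in> U \<and> \<psi> z = \<phi> (c + L z))"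
    using lin LB ph No p0 unfolding cL N_def
    by (intro exI[of _ c] exI[of _ L] exI[of _ \<phi>] exI[of _ N]) (auto simp: cL N_def)
qed

context setting
begin

lemma nilpotent_all: "p \<in> U \<Longrightarrow> nilpotent4 (ricop (gpr F) (gpr_inv F) p)"
proof -
  assume p: "p \<in> U"
  have dF: "F differentiable (at p)" "\<And>m. pd m F differentiable (at p)"
    using DU p smp by blast+
  note rv = ricci_vals[OF dF]
  have F00: "pd 0 (pd 0 F) p = 0" using step2[OF p] by simp
  show ?thesis
    by (rule nilp) (use rv F00 in auto)
qed

lemma fiber_const:
  assumes df: "\<And>x. x \<in> U \<Longrightarrow> f differentiable (at x)"
    and p: "p \<in> U" and q: "q \<in> U"
    and z: "\<And>x. x \<in> U \<Longrightarrow> (fst (q - p)) * pd 0 f x + fst (snd (q - p)) * pd 1 f x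
          + fst (snd (snd (q - p))) * pd 2 f x + snd (snd (snd (q - p))) * pd 3 f x = 0"
  shows "f p = f q"
proof -
  obtain a b c e where qp: "q - p = (a, b, c, e)" by (metis prod.collapse)
  show ?thesis
    by (rule const_dir[OF U_open U_convex df p q qp]) (use z qp in auto)
qed


lemma h_part: "\<exists>hx hy h0 :: real \<Rightarrow> real.
            smooth_on ((\<lambda>(u,v,x,y). v) ` U) hx \<and> smooth_on ((\<lambda>(u,v,x,y). v) ` U) hy
          \<and> smooth_on ((\<lambda>(u,v,x,y). v) ` U) h0
          \<and> (\<forall>u v x y. (u,v,x,y) \<in> U \<longrightarrow> h (u,v,x,y) = hx v * x + hy v * y + h0 v)"
proof -
  define pick where "pick v = (SOME p. p \<in> U \<and> fst (snd p) = v)" for v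
  define ch where "ch p = h p - cx p * pd 2 h p - cy p * pd 3 h p" for p
  have pick: "pick (fst (snd p)) \<in> U \<and> fst (snd (pick (fst (snd p)))) = fst (snd p)" if "p \<in> U" for p
    unfolding pick_def by (rule someI[of _ p]) (use that in simp)
  have dchi: "ch differentiable (at x)" if x: "x \<in> U" for x
    unfolding ch_def using DU x smp diff_coord by (intro differentiable_diff differentiable_mult) auto
  have fib: "pd 2 h p = pd 2 h q \<and> pd 3 h p = pd 3 h q \<and> ch p = ch q"
    if p: "p \<in> U" and q: "q \<in> U" and pq: "fst (snd p) = fst (snd q)" for p q
  proof -
    have z: "fst (snd (q - p)) = 0" using pq by simp
    have 1: "pd 2 h p = pd 2 h q"
      by (rule fiber_const[OF _ p q]) (use DU smp basic step2 z in simp_all)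
    have 2: "pd 3 h p = pd 3 h q"
      by (rule fiber_const[OF _ p q]) (use DU smp basic step2 z in simp_all)
    have d: "pd 0 ch x = 0 \<and> pd 2 ch x = 0 \<and> pd 3 ch x = 0" if x: "x \<in> U" for x
      unfolding ch_def using x step1[OF x] basic[OF x] step2[OF x]
      by (simp add: pdr pd_coord DU smp diff_coord)
    have 3: "ch p = ch q"
    proof (rule fiber_const[OF dchi p q])
      fix x assume x: "x \<in> U"
      show "fst (q - p) * pd 0 ch x + fst (snd (q - p)) * pd 1 ch x +
         fst (snd (snd (q - p))) * pd 2 ch x + snd (snd (snd (q - p))) * pd 3 ch x = 0"
        using d[OF x] z by simp
    qed
    show ?thesis using 1 2 3 by blast
  qed
  have hxs: "smooth_on ((\<lambda>(u,v,x,y). v) ` U) (\<lambda>v. pd 2 h (pick v))"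
  proof (rule smooth_v[OF U_open])
    fix u0 v0 x0 y0 assume "(u0, v0, x0, y0) \<in> U"
    show "\<exists>\<phi>. smooth_on U \<phi> \<and> (\<forall>z. (u0, z, x0, y0) \<in> U \<longrightarrow> pd 2 h (pick z) = \<phi> (u0, z, x0, y0))"
    proof (intro exI[of _ "pd 2 h"] conjI allI impI)
      show "smooth_on U (pd 2 h)" using smp by simp
      fix z assume z: "(u0, z, x0, y0) \<in> U"
      have "pick z \<in> U" "fst (snd (pick z)) = z" using pick[OF z] by simp_all
      then show "pd 2 h (pick z) = pd 2 h (u0, z, x0, y0)" using fib[of "pick z" "(u0, z, x0, y0)"] z by simp
    qed
  qed
  have hys: "smooth_on ((\<lambda>(u,v,x,y). v) ` U) (\<lambda>v. pd 3 h (pick v))"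
  proof (rule smooth_v[OF U_open])
    fix u0 v0 x0 y0 assume "(u0, v0, x0, y0) \<in> U"
    show "\<exists>\<phi>. smooth_on U \<phi> \<and> (\<forall>z. (u0, z, x0, y0) \<in> U \<longrightarrow> pd 3 h (pick z) = \<phi> (u0, z, x0, y0))"
    proof (intro exI[of _ "pd 3 h"] conjI allI impI)
      show "smooth_on U (pd 3 h)" using smp by simp
      fix z assume z: "(u0, z, x0, y0) \<in> U"
      have "pick z \<in> U" "fst (snd (pick z)) = z" using pick[OF z] by simp_all
      then show "pd 3 h (pick z) = pd 3 h (u0, z, x0, y0)" using fib[of "pick z" "(u0, z, x0, y0)"] z by simp
    qed
  qed
  have h0s: "smooth_on ((\<lambda>(u,v,x,y). v) ` U) (\<lambda>v. ch (pick v))"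
  proof (rule smooth_v[OF U_open])
    fix u0 v0 x0 y0 assume "(u0, v0, x0, y0) \<in> U"
    define \<phi> where "\<phi> = (\<lambda>p. (h p + (- x0) * pd 2 h p) + (- y0) * pd 3 h p)"
    have sphi: "smooth_on U \<phi>" unfolding \<phi>_def
      by (intro smooth_lincomb[OF U_open] smp)
    have "ch (pick z) = \<phi> (u0, z, x0, y0)" if "(u0, z, x0, y0) \<in> U" for z
    proof -
      have "pick z \<in> U" "fst (snd (pick z)) = z" using pick[OF that] by simp_all
      then have "ch (pick z) = ch (u0, z, x0, y0)" using fib[of "pick z" "(u0, z, x0, y0)"] that by simp
      then show ?thesis unfolding ch_def \<phi>_def by (simp add: cx_def cy_def)
    qed
    then show "\<exists>\<phi>. smooth_on U \<phi> \<and> (\<forall>z. (u0, z, x0, y0) \<in> U \<longrightarrow> ch (pick z) = \<phi> (u0, z, x0, y0))"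
      using sphi by blast
  qed
  have rep: "h (u,v,x,y) = pd 2 h (pick v) * x + pd 3 h (pick v) * y + ch (pick v)"
    if "(u,v,x,y) \<in> U" for u v x y
  proof -
    have "pick v \<in> U" "fst (snd (pick v)) = v" using pick[OF that] by simp_all
    then have "pd 2 h (pick v) = pd 2 h (u,v,x,y) \<and> pd 3 h (pick v) = pd 3 h (u,v,x,y) \<and> ch (pick v) = ch (u,v,x,y)"
      using fib[of "pick v" "(u,v,x,y)"] that by simp
    then show ?thesis unfolding ch_def by (simp add: cx_def cy_def algebra_simps)
  qed
  show ?thesis using hxs hys h0s rep by blast
qed

lemma F_part: "\<exists>F1 F0 :: real \<times> real \<times> real \<Rightarrow> real.
            smooth_on ((\<lambda>(u,v,x,y). (v,x,y)) ` U) F1 \<and> smooth_on ((\<lambda>(u,v,x,y). (v,x,y)) ` U) F0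
          \<and> (\<forall>u v x y. (u,v,x,y) \<in> U \<longrightarrow> F (u,v,x,y) = F1 (v,x,y) * u + F0 (v,x,y))"
proof -
  define pick where "pick w = (SOME p. p \<in> U \<and> snd p = w)" for w
  define ch where "ch p = F p - cu p * pd 0 F p" for p
  have pick: "pick (snd p) \<in> U \<and> snd (pick (snd p)) = snd p" if "p \<in> U" for p
    unfolding pick_def by (rule someI[of _ p]) (use that in simp)
  have dchi: "ch differentiable (at x)" if x: "x \<in> U" for x
    unfolding ch_def using DU x smp diff_coord by (intro differentiable_diff differentiable_mult) auto
  have fib: "pd 0 F p = pd 0 F q \<and> ch p = ch q"
    if p: "p \<in> U" and q: "q \<in> U" and pq: "snd p = snd q" for p q
  proof -
    have z: "snd (q - p) = 0" "fst (snd (q - p)) = 0" "fst (snd (snd (q - p))) = 0" "snd (snd (snd (q - p))) = 0"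
      using pq by simp_all
    have 1: "pd 0 F p = pd 0 F q"
      by (rule fiber_const[OF _ p q]) (use DU smp step2 z in simp_all)
    have d: "pd 0 ch x = 0" if x: "x \<in> U" for x
      unfolding ch_def using x step2[OF x]
      by (simp add: pdr pd_coord DU smp diff_coord)
    have 3: "ch p = ch q"
    proof (rule fiber_const[OF dchi p q])
      fix x assume x: "x \<in> U"
      show "fst (q - p) * pd 0 ch x + fst (snd (q - p)) * pd 1 ch x +
         fst (snd (snd (q - p))) * pd 2 ch x + snd (snd (snd (q - p))) * pd 3 ch x = 0"
        using d[OF x] z by simp
    qed
    show ?thesis using 1 3 by blast
  qed
  have F1s: "smooth_on ((\<lambda>(u,v,x,y). (v,x,y)) ` U) (\<lambda>w. pd 0 F (pick w))"
  proof (rule smooth_vxy[OF U_open])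
    fix u0 w0 assume "(u0, w0) \<in> U"
    show "\<exists>\<phi>. smooth_on U \<phi> \<and> (\<forall>w. (u0, w) \<in> U \<longrightarrow> pd 0 F (pick w) = \<phi> (u0, w))"
    proof (intro exI[of _ "pd 0 F"] conjI allI impI)
      show "smooth_on U (pd 0 F)" using smp by simp
      fix w assume w: "(u0, w) \<in> U"
      have "pick w \<in> U" "snd (pick w) = w" using pick[OF w] by simp_all
      then show "pd 0 F (pick w) = pd 0 F (u0, w)" using fib[of "pick w" "(u0, w)"] w by simp
    qed
  qed
  have F0s: "smooth_on ((\<lambda>(u,v,x,y). (v,x,y)) ` U) (\<lambda>w. ch (pick w))"
  proof (rule smooth_vxy[OF U_open])
    fix u0 w0 assume "(u0, w0) \<in> U"
    define \<phi> where "\<phi> = (\<lambda>p. F p + (- u0) * pd 0 F p)"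
    have sphi: "smooth_on U \<phi>" unfolding \<phi>_def
      by (intro smooth_lincomb[OF U_open] smp)
    have "ch (pick w) = \<phi> (u0, w)" if "(u0, w) \<in> U" for w
    proof -
      have "pick w \<in> U" "snd (pick w) = w" using pick[OF that] by simp_all
      then have "ch (pick w) = ch (u0, w)" using fib[of "pick w" "(u0, w)"] that by simp
      then show ?thesis unfolding ch_def \<phi>_def by (simp add: cu_def)
    qed
    then show "\<exists>\<phi>. smooth_on U \<phi> \<and> (\<forall>w. (u0, w) \<in> U \<longrightarrow> ch (pick w) = \<phi> (u0, w))"
      using sphi by blast
  qed
  have rep: "F (u,v,x,y) = pd 0 F (pick (v,x,y)) * u + ch (pick (v,x,y))"
    if "(u,v,x,y) \<in> U" for u v x y
  proof -
    have "pick (v,x,y) \<in> U" "snd (pick (v,x,y)) = (v,x,y)" using pick[OF that] by simp_all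
    then have "pd 0 F (pick (v,x,y)) = pd 0 F (u,v,x,y) \<and> ch (pick (v,x,y)) = ch (u,v,x,y)"
      using fib[of "pick (v,x,y)" "(u,v,x,y)"] that by simp
    then show ?thesis unfolding ch_def by (simp add: cu_def algebra_simps)
  qed
  show ?thesis using F1s F0s rep by blast
qed
end

theorem lemma3p2:
  fixes U :: "pt set" and F h :: "pt \<Rightarrow> real"
  assumes U_open: "open U" and U_convex: "convex U" and U_ne: "U \<noteq> {}"
    and F_smooth: "smooth_on U F"
    and h_smooth: "smooth_on U h"
    and h_pos: "\<forall>p\<in>U. h p > 0"
    and h_nonconst: "\<forall>W. open W \<and> W \<noteq> {} \<and> W \<subseteq> U \<longrightarrow> \<not> (\<exists>c. \<forall>p\<in>W. h p = c)"
    and vacuum: "\<forall>p\<in>U. \<forall>i<4. \<forall>j<4. weinstein (gpr F) (gpr_inv F) h i j p = 0"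
    and nonflat: "\<forall>W. open W \<and> W \<noteq> {} \<and> W \<subseteq> U \<longrightarrow>
                    (\<exists>p\<in>W. \<exists>l<4. \<exists>i<4. \<exists>j<4. \<exists>k<4. riem (gpr F) (gpr_inv F) l i j k p \<noteq> 0)"
  shows "(\<forall>p\<in>U. nilpotent4 (ricop (gpr F) (gpr_inv F) p))
       \<and> (\<exists>hx hy h0 :: real \<Rightarrow> real.
            smooth_on ((\<lambda>(u,v,x,y). v) ` U) hx \<and> smooth_on ((\<lambda>(u,v,x,y). v) ` U) hy
          \<and> smooth_on ((\<lambda>(u,v,x,y). v) ` U) h0
          \<and> (\<forall>u v x y. (u,v,x,y) \<in> U \<longrightarrow> h (u,v,x,y) = hx v * x + hy v * y + h0 v))
       \<and> (\<exists>F1 F0 :: real \<times> real \<times> real \<Rightarrow> real.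
            smooth_on ((\<lambda>(u,v,x,y). (v,x,y)) ` U) F1 \<and> smooth_on ((\<lambda>(u,v,x,y). (v,x,y)) ` U) F0
          \<and> (\<forall>u v x y. (u,v,x,y) \<in> U \<longrightarrow> F (u,v,x,y) = F1 (v,x,y) * u + F0 (v,x,y)))"
  proof -
  interpret setting U F h
    by (unfold_locales) (use U_open U_convex F_smooth h_smooth h_pos vacuum nonflat in auto)
  show ?thesis using nilpotent_all h_part F_part by blast
qed

end
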